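(* Fix $\mathbf{x} \in \Omega$ and $\alpha \in [0,1)$, and let $C = \{s \in S : s = x_k \text{ for some } k \in \{1,\dots,n\}\}$ be the set of values occurring in $\mathbf{x}$. Then $$B_{T_\ell}^*(\mathbf{x}) = \min\{E[F] : F \in \mathcal{F}_{C^+}(\Omega(\mathbf{x},T_\ell),\alpha)\}.$$
   Context: Fix integers $m \ge 2$, $n \ge 1$ and reals $S_{\min} < S_{\max}$; $S = \{S_0,\dots,S_{m-1}\}$ with $S_k = S_{\min} + k\frac{S_{\max}-S_{\min}}{m-1}$. $\mathcal{F}$ is the set of probability distributions on $S$, identified with the probability simplex in $\mathbb{R}^m$ with the Euclidean topology; $E[F]$ is the mean. $\Omega$ is the set of samples of size $n$ from $S$, identified with their sorted versions $x_{(1)} \le \dots \le x_{(n)}$. $P_F[\Omega']$ is the probability that the sorted sample of $n$ i.i.d. draws from $F$ lies in $\Omega' \subseteq \Omega$; $\mathcal{G}(\Omega',\alpha) = \{F : P_F[\Omega'] > \alpha\}$ and $\mathcal{F}(\Omega',\alpha)$ is its closure. The low lexicographic order $T_\ell$: $\mathbf{x} \le_{T_\ell} \mathbf{y}$ iff $\mathbf{x}=\mathbf{y}$ or at the smallest index $j$ with $x_{(j)} \ne y_{(j)}$ we have $x_{(j)} < y_{(j)}$; $\Omega(\mathbf{x},T_\ell) = \{\mathbf{y} : \mathbf{x} \le_{T_\ell} \mathbf{y}\}$; $B_{T_\ell}^*(\mathbf{x}) = \min\{E[F] : F \in \mathcal{F}(\Omega(\mathbf{x},T_\ell),\alpha)\}$.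 For $C \subseteq S$: $\mathcal{F}_C = \{F \in \mathcal{F} : P_F[X = s] = 0 \ \forall s \in S\setminus C\}$, $\mathcal{G}_C(\Omega',\alpha) = \mathcal{F}_C \cap \mathcal{G}(\Omega',\alpha)$, $\mathcal{F}_C(\Omega',\alpha)$ is the closure of $\mathcal{G}_C(\Omega',\alpha)$, and $C^+ = C \cup \{S_{\min}\} \cup \{S_{j+1} : S_j \in C,\ j \le m-2\}$. *)

theory Defs
  imports "HOL-Analysis.Analysis"
begin

definition Spt :: "nat \<Rightarrow> real \<Rightarrow> real \<Rightarrow> nat \<Rightarrow> real" where
  "Spt m Smin Smax k = Smin + real k * (Smax - Smin) / (real m - 1)"

definition Sset :: "nat \<Rightarrow> real \<Rightarrow> real \<Rightarrow> real set" where
  "Sset m Smin Smax = Spt m Smin Smax ` {..<m}"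

text \<open>Distributions on S: F k is the probability of S_k; identified with the
  simplex in R^m (functions vanishing outside {..<m}, product topology = Euclidean).\<close>
definition Dists :: "nat \<Rightarrow> (nat \<Rightarrow> real) set" where
  "Dists m = {F. (\<forall>k<m. 0 \<le> F k) \<and> (\<forall>k\<ge>m. F k = 0) \<and> (\<Sum>k<m. F k) = 1}"

definition mean :: "nat \<Rightarrow> real \<Rightarrow> real \<Rightarrow> (nat \<Rightarrow> real) \<Rightarrow> real" where
  "mean m Smin Smax F = (\<Sum>k<m. F k * Spt m Smin Smax k)"

definition Samples :: "nat \<Rightarrow> nat \<Rightarrow> real \<Rightarrow> real \<Rightarrow> real list set" where
  "Samples m n Smin Smax = {xs. length xs = n \<and> sorted xs \<and> set xs \<subseteq> Sset m Smin Smax}"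

text \<open>Probability that the sorted sample of n i.i.d. draws from F lies in A.\<close>
definition probS :: "nat \<Rightarrow> nat \<Rightarrow> real \<Rightarrow> real \<Rightarrow> (nat \<Rightarrow> real) \<Rightarrow> real list set \<Rightarrow> real" where
  "probS m n Smin Smax F A =
     (\<Sum>ks\<in>{ks. length ks = n \<and> set ks \<subseteq> {..<m}}.
        (if sort (map (Spt m Smin Smax) ks) \<in> A then prod_list (map F ks) else 0))"

definition Gset :: "nat \<Rightarrow> nat \<Rightarrow> real \<Rightarrow> real \<Rightarrow> real list set \<Rightarrow> real \<Rightarrow> (nat \<Rightarrow> real) set" where
  "Gset m n Smin Smax A \<alpha> = {F \<in> Dists m. probS m n Smin Smax F A > \<alpha>}"

definition Fset :: "nat \<Rightarrow> nat \<Rightarrow> real \<Rightarrow> real \<Rightarrow> real list set \<Rightarrow> real \<Rightarrow> (nat \<Rightarrow> real) set" where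
  "Fset m n Smin Smax A \<alpha> = closure (Gset m n Smin Smax A \<alpha>)"

definition DistsC :: "nat \<Rightarrow> real \<Rightarrow> real \<Rightarrow> real set \<Rightarrow> (nat \<Rightarrow> real) set" where
  "DistsC m Smin Smax C = {F \<in> Dists m. \<forall>k<m. Spt m Smin Smax k \<notin> C \<longrightarrow> F k = 0}"

definition GsetC :: "nat \<Rightarrow> nat \<Rightarrow> real \<Rightarrow> real \<Rightarrow> real set \<Rightarrow> real list set \<Rightarrow> real \<Rightarrow> (nat \<Rightarrow> real) set" where
  "GsetC m n Smin Smax C A \<alpha> = DistsC m Smin Smax C \<inter> Gset m n Smin Smax A \<alpha>"

definition FsetC :: "nat \<Rightarrow> nat \<Rightarrow> real \<Rightarrow> real \<Rightarrow> real set \<Rightarrow> real list set \<Rightarrow> real \<Rightarrow> (nat \<Rightarrow> real) set" where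
  "FsetC m n Smin Smax C A \<alpha> = closure (GsetC m n Smin Smax C A \<alpha>)"

definition Cplus :: "nat \<Rightarrow> real \<Rightarrow> real \<Rightarrow> real set \<Rightarrow> real set" where
  "Cplus m Smin Smax C = C \<union> {Smin} \<union>
     {Spt m Smin Smax (Suc j) | j. j \<le> m - 2 \<and> Spt m Smin Smax j \<in> C}"

definition lowlex_le :: "real list \<Rightarrow> real list \<Rightarrow> bool" where
  "lowlex_le xs ys \<longleftrightarrow> xs = ys \<or>
     (\<exists>j. j < length xs \<and> j < length ys \<and> (\<forall>i<j. xs ! i = ys ! i) \<and> xs ! j < ys ! j)"

definition OmegaT :: "nat \<Rightarrow> nat \<Rightarrow> real \<Rightarrow> real \<Rightarrow> real list \<Rightarrow> real list set" where
  "OmegaT m n Smin Smax xs = {ys \<in> Samples m n Smin Smax. lowlex_le xs ys}"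

text \<open>B*_{T_l}(x) = min {E[F] : F \<in> F(\<Omega>(x,T_l),\<alpha>)} (rendered as Inf; the set is
  compact and nonempty, so the Inf is the minimum).\<close>
definition Bstar :: "nat \<Rightarrow> nat \<Rightarrow> real \<Rightarrow> real \<Rightarrow> real \<Rightarrow> real list \<Rightarrow> real" where
  "Bstar m n Smin Smax \<alpha> xs =
     Inf (mean m Smin Smax ` Fset m n Smin Smax (OmegaT m n Smin Smax xs) \<alpha>)"

end

theory Submission
  imports Defs
begin

lemma sort_map_mono:
  assumes "mono f"
  shows "sort (map f xs) = map f (sort xs)"
proof -
  have "sorted (map f (sort xs))"
    using assms by (simp add: sorted_map monoD sorted_wrt_mono_rel[of _ "(\<le>)"])
  moreover have "mset (map f (sort xs)) = mset (map f xs)" by simp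
  ultimately show ?thesis by (metis properties_for_sort)
qed

definition psi :: "(nat \<Rightarrow> bool) \<Rightarrow> nat \<Rightarrow> nat" where
  "psi P z = (GREATEST j. j \<le> z \<and> P j)"

lemma psi_props:
  assumes "P 0"
  shows "psi P z \<le> z" "P (psi P z)" "j \<le> z \<Longrightarrow> P j \<Longrightarrow> j \<le> psi P z"
proof -
  have ex: "0 \<le> z \<and> P 0" using assms by simp
  have b: "\<forall>y. y \<le> z \<and> P y \<longrightarrow> y \<le> z" by simp
  show "psi P z \<le> z" "P (psi P z)" unfolding psi_def
    using GreatestI_nat[of "\<lambda>j. j \<le> z \<and> P j" 0 z] ex by auto
  show "j \<le> z \<Longrightarrow> P j \<Longrightarrow> j \<le> psi P z" unfolding psi_def
    by (rule Greatest_le_nat[of "\<lambda>j. j \<le> z \<and> P j" j z]) auto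
qed

lemma psi_mono: assumes "P 0" shows "mono (psi P)"
  by (rule monoI) (meson assms le_trans psi_props)

definition push :: "nat \<Rightarrow> (nat \<Rightarrow> nat) \<Rightarrow> (nat \<Rightarrow> real) \<Rightarrow> nat \<Rightarrow> real" where
  "push m p F = (\<lambda>j. sum F {k. k < m \<and> p k = j})"

lemma regroup:
  assumes "\<And>k. k < m \<Longrightarrow> p k < m"
  shows "(\<Sum>j<m. push m p F j * h j) = (\<Sum>k<m. F k * h (p k))"
proof -
  have "(\<Sum>j<m. push m p F j * h j) = (\<Sum>j<m. \<Sum>k\<in>{k \<in> {..<m}. p k = j}. F k * h (p k))"
    unfolding push_def sum_distrib_right
    by (intro sum.cong refl) auto
  also have "\<dots> = (\<Sum>k<m. F k * h (p k))"
    by (rule sum.group) (use assms in auto)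
  finally show ?thesis .
qed

definition Ls :: "nat \<Rightarrow> nat \<Rightarrow> nat list set" where
  "Ls m n = {ks. length ks = n \<and> set ks \<subseteq> {..<m}}"

lemma Ls_finite: "finite (Ls m n)"
  unfolding Ls_def using finite_lists_length_eq[of "{..<m}" n] by (simp add: conj_commute)

lemma Ls_Suc: "Ls m (Suc n) = (\<lambda>(k, ks). k # ks) ` ({..<m} \<times> Ls m n)"
  unfolding Ls_def by (auto simp: length_Suc_conv image_iff)

lemma sum_Ls_Suc: "(\<Sum>ks\<in>Ls m (Suc n). g ks) = (\<Sum>k<m. \<Sum>ks\<in>Ls m n. g (k # ks))"
proof -
  have "inj_on (\<lambda>(k, ks). k # ks) ({..<m} \<times> Ls m n)" by (auto simp: inj_on_def)
  then have "(\<Sum>ks\<in>Ls m (Suc n). g ks) = (\<Sum>x\<in>{..<m} \<times> Ls m n. g (fst x # snd x))"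
    unfolding Ls_Suc by (subst sum.reindex) (auto simp: case_prod_beta)
  also have "\<dots> = (\<Sum>k<m. \<Sum>ks\<in>Ls m n. g (k # ks))"
    by (simp only: sum.cartesian_product) (simp add: case_prod_unfold)
  finally show ?thesis .
qed

lemma push_prob:
  assumes "\<And>k. k < m \<Longrightarrow> p k < m"
  shows "(\<Sum>ks\<in>Ls m n. g ks * prod_list (map (push m p F) ks))
       = (\<Sum>ks\<in>Ls m n. g (map p ks) * prod_list (map F ks))"
proof (induction n arbitrary: g)
  case 0
  then show ?case by (simp add: Ls_def)
next
  case (Suc n)
  have "(\<Sum>ks\<in>Ls m (Suc n). g ks * prod_list (map (push m p F) ks))
      = (\<Sum>k<m. push m p F k * (\<Sum>ks\<in>Ls m n. g (k # ks) * prod_list (map (push m p F) ks)))"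
    unfolding sum_Ls_Suc by (simp add: sum_distrib_left mult_ac)
  also have "\<dots> = (\<Sum>k<m. push m p F k * (\<Sum>ks\<in>Ls m n. g (k # map p ks) * prod_list (map F ks)))"
    using Suc[of "\<lambda>ks. g (_ # ks)"] by simp
  also have "\<dots> = (\<Sum>k<m. F k * (\<Sum>ks\<in>Ls m n. g (p k # map p ks) * prod_list (map F ks)))"
    by (rule regroup[OF assms])
  also have "\<dots> = (\<Sum>ks\<in>Ls m (Suc n). g (map p ks) * prod_list (map F ks))"
    unfolding sum_Ls_Suc by (simp add: sum_distrib_left mult_ac)
  finally show ?case .
qed


lemma Spt_strict:
  assumes "m \<ge> 2" "Smin < Smax" "i < j"
  shows "Spt m Smin Smax i < Spt m Smin Smax j"
proof -
  have "real m - 1 > 0" using assms by simp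
  moreover have "real i * (Smax - Smin) < real j * (Smax - Smin)" using assms by simp
  ultimately show ?thesis unfolding Spt_def by (simp add: divide_strict_right_mono)
qed

lemma Spt_mono:
  assumes "m \<ge> 2" "Smin < Smax"
  shows "mono (Spt m Smin Smax)"
  by (rule monoI) (metis Spt_strict assms le_neq_implies_less order_refl less_imp_le)

lemma Spt_le_iff:
  assumes "m \<ge> 2" "Smin < Smax"
  shows "Spt m Smin Smax i \<le> Spt m Smin Smax j \<longleftrightarrow> i \<le> j"
  using Spt_strict[OF assms] by (metis not_le less_imp_le Spt_mono[OF assms] monoD)

lemma Spt_0: "Spt m Smin Smax 0 = Smin" by (simp add: Spt_def)

lemma probS_alt:
  "probS m n Smin Smax F A = (\<Sum>ks\<in>Ls m n. (if sort (map (Spt m Smin Smax) ks) \<in> A then 1 else 0) * prod_list (map F ks))"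
  unfolding probS_def Ls_def by (intro sum.cong refl) auto

lemma key:
  assumes m2: "m \<ge> 2" and sl: "Smin < Smax" and xs: "xs \<in> Samples m n Smin Smax"
    and ks: "ks \<in> Ls m n"
    and D: "set xs \<subseteq> D" "\<And>k. Suc k < m \<Longrightarrow> Spt m Smin Smax k \<in> set xs \<Longrightarrow> Spt m Smin Smax (Suc k) \<in> D"
    and P0: "Spt m Smin Smax 0 \<in> D"
    and in1: "sort (map (Spt m Smin Smax) ks) \<in> OmegaT m n Smin Smax xs"
  shows "sort (map (Spt m Smin Smax) (map (psi (\<lambda>j. Spt m Smin Smax j \<in> D)) ks)) \<in> OmegaT m n Smin Smax xs"
proof -
  define S where "S = Spt m Smin Smax"
  define p where "p = psi (\<lambda>j. S j \<in> D)"
  have P0': "S 0 \<in> D" using P0 S_def by simp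
  have pp: "p z \<le> z" "S (p z) \<in> D" "j \<le> z \<Longrightarrow> S j \<in> D \<Longrightarrow> j \<le> p z" for z j
    unfolding p_def using psi_props[where P="\<lambda>j. S j \<in> D", OF P0'] by auto
  have pfix: "S z \<in> D \<Longrightarrow> p z = z" for z using pp(1)[of z] pp(3)[of z z] by auto
  have monoS: "mono S" unfolding S_def by (rule Spt_mono[OF m2 sl])
  have monop: "mono p" unfolding p_def by (rule psi_mono) (use P0' in auto)
  define zs where "zs = sort ks"
  have e1: "sort (map S ks) = map S zs" unfolding zs_def by (rule sort_map_mono[OF monoS])
  have e2: "sort (map S (map p ks)) = map (S \<circ> p) zs" unfolding zs_def map_map
    by (rule sort_map_mono) (use monoS monop in \<open>simp add: mono_def\<close>)
  have zsL: "length zs = n" "set zs \<subseteq> {..<m}" using ks unfolding zs_def Ls_def by auto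
  have xsL: "length xs = n" "sorted xs" "set xs \<subseteq> Sset m Smin Smax" using xs unfolding Samples_def by auto
  have lw: "lowlex_le xs (map S zs)" using in1 e1 unfolding OmegaT_def S_def by auto
  have samp: "map (S \<circ> p) zs \<in> Samples m n Smin Smax"
    unfolding Samples_def
  proof (intro CollectI conjI)
    show "length (map (S \<circ> p) zs) = n" using zsL by simp
    show "sorted (map (S \<circ> p) zs)" unfolding zs_def
      using monoS monop by (simp add: sorted_map mono_def sorted_wrt_mono_rel[of _ "(\<le>)"])
    show "set (map (S \<circ> p) zs) \<subseteq> Sset m Smin Smax"
    proof
      fix y assume "y \<in> set (map (S \<circ> p) zs)"
      then obtain z where z: "z \<in> set zs" "y = S (p z)" by auto
      have "p z < m" using zsL(2) z(1) pp(1)[of z] by auto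
      then show "y \<in> Sset m Smin Smax" unfolding Sset_def S_def using z(2) S_def by auto
    qed
  qed
  have fixin: "x \<in> set xs \<Longrightarrow> x = S z \<Longrightarrow> p z = z" for x z using pfix D(1) by auto
  have "lowlex_le xs (map (S \<circ> p) zs)"
    using lw unfolding lowlex_le_def
  proof (elim disjE exE conjE)
    assume eq: "xs = map S zs"
    have "\<forall>z\<in>set zs. p z = z"
    proof
      fix z assume "z \<in> set zs"
      then have "S z \<in> set xs" using eq by simp
      then show "p z = z" by (rule fixin) (rule refl)
    qed
    then have "map (S \<circ> p) zs = map S zs" by simp
    then show "xs = map (S \<circ> p) zs \<or> (\<exists>j<length xs. j < length (map (S \<circ> p) zs) \<and> (\<forall>i<j. xs ! i = map (S \<circ> p) zs ! i) \<and> xs ! j < map (S \<circ> p) zs ! j)"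
      using eq by simp
  next
    fix j assume j: "j < length xs" "j < length (map S zs)" and bef: "\<forall>i<j. xs ! i = map S zs ! i"
      and at: "xs ! j < map S zs ! j"
    have bef': "\<forall>i<j. xs ! i = map (S \<circ> p) zs ! i"
    proof (intro allI impI)
      fix i assume "i < j"
      then have "xs ! i = S (zs ! i)" "i < length xs" using bef j by auto
      have "xs ! i \<in> set xs" using \<open>i < length xs\<close> by (rule nth_mem)
      then have "p (zs ! i) = zs ! i" using fixin \<open>xs ! i = S (zs ! i)\<close> by blast
      then show "xs ! i = map (S \<circ> p) zs ! i" using \<open>xs ! i = S (zs ! i)\<close> j \<open>i < j\<close> by simp
    qed
    have xj: "xs ! j \<in> Sset m Smin Smax" using xsL j by (auto simp: nth_mem)
    then obtain k where k: "k < m" "xs ! j = S k" unfolding Sset_def S_def by auto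
    have "zs ! j \<in> set zs" using j by simp
    then have zj: "zs ! j < m" using zsL(2) by blast
    have "S k < S (zs ! j)" using at k j by simp
    then have "k < zs ! j" unfolding S_def using Spt_le_iff[OF m2 sl] by (meson not_le)
    then have sk: "Suc k < m" using zj by simp
    have "S (Suc k) \<in> D" using D(2)[OF sk] k j unfolding S_def by (metis nth_mem)
    then have "Suc k \<le> p (zs ! j)" using pp(3)[of "Suc k" "zs ! j"] \<open>k < zs ! j\<close> by simp
    then have "S (Suc k) \<le> S (p (zs ! j))" using monoS by (simp add: monoD)
    moreover have "S k < S (Suc k)" unfolding S_def by (rule Spt_strict[OF m2 sl]) simp
    ultimately have "xs ! j < map (S \<circ> p) zs ! j" using k j by simp
    then show "xs = map (S \<circ> p) zs \<or> (\<exists>j<length xs. j < length (map (S \<circ> p) zs) \<and> (\<forall>i<j. xs ! i = map (S \<circ> p) zs ! i) \<and> xs ! j < map (S \<circ> p) zs ! j)"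
      using j bef' by auto
  qed
  then show ?thesis using samp e2 unfolding OmegaT_def S_def p_def by auto
qed


lemma cont_coord: "continuous_on S (\<lambda>F::nat \<Rightarrow> real. F k)"
  by (rule continuous_on_subset[OF continuous_on_product_coordinates]) simp
lemma cont_push: "continuous_on S (push m p)"
  unfolding push_def
  apply (rule continuous_on_coordinatewise_then_product)
  apply (rule continuous_on_sum)
  by (rule cont_coord)
lemma cont_mean: "continuous_on S (mean m Smin Smax)"
  unfolding mean_def
  apply (rule continuous_on_sum)
  apply (rule continuous_on_mult_right)
  by (rule cont_coord)
lemma closed_Dists: "closed (Dists m)"
proof -
  have "Dists m = (\<Inter>k\<in>{..<m}. {F. 0 \<le> F k}) \<inter> (\<Inter>k\<in>{m..}. {F. F k = 0}) \<inter> {F. (\<Sum>k<m. F k) = 1}"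
    unfolding Dists_def by auto
  moreover have "closed {F::nat\<Rightarrow>real. 0 \<le> F k}" for k
    by (intro closed_Collect_le continuous_on_const) (simp add: cont_coord)
  moreover have "closed {F::nat\<Rightarrow>real. F k = 0}" for k
    by (intro closed_Collect_eq continuous_on_const) (simp add: cont_coord)
  moreover have "closed {F::nat\<Rightarrow>real. (\<Sum>k<m. F k) = 1}"
    by (intro closed_Collect_eq continuous_on_const continuous_on_sum cont_coord)
  ultimately show ?thesis by (simp add: closed_INT closed_Int)
qed

lemma compact_box: "compact (PiE UNIV (\<lambda>k. if k < m then {0..1::real} else {0}))"
proof -
  have "compactin (product_topology (\<lambda>i. euclidean) UNIV) (PiE UNIV (\<lambda>k. if k < m then {0..1::real} else {0}))"
    by (subst compactin_PiE) auto
  then show ?thesis by (simp add: euclidean_product_topology)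
qed

lemma Dists_box: "Dists m \<subseteq> PiE UNIV (\<lambda>k. if k < m then {0..1::real} else {0})"
proof
  fix F assume F: "F \<in> Dists m"
  have "F k \<le> 1" if "k < m" for k
  proof -
    have "F k \<le> (\<Sum>k<m. F k)"
      by (rule member_le_sum) (use F that in \<open>auto simp: Dists_def\<close>)
    then show ?thesis using F by (simp add: Dists_def)
  qed
  then show "F \<in> PiE UNIV (\<lambda>k. if k < m then {0..1::real} else {0})"
    using F by (auto simp: Dists_def PiE_def)
qed

lemma push_Dists:
  assumes F: "F \<in> Dists m" and p: "\<And>k. k < m \<Longrightarrow> p k < m"
    and pD: "\<And>k. k < m \<Longrightarrow> Spt m Smin Smax (p k) \<in> D"
  shows "push m p F \<in> DistsC m Smin Smax D"
proof -
  have nn: "\<And>k. k < m \<Longrightarrow> 0 \<le> F k" and z: "\<And>k. k \<ge> m \<Longrightarrow> F k = 0" and s: "(\<Sum>k<m. F k) = 1"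
    using F by (auto simp: Dists_def)
  have "(\<Sum>j<m. push m p F j) = (\<Sum>j<m. push m p F j * 1)" by simp
  also have "\<dots> = (\<Sum>k<m. F k * 1)" by (rule regroup[OF p])
  finally have "(\<Sum>j<m. push m p F j) = 1" using s by simp
  moreover have "0 \<le> push m p F j" for j unfolding push_def by (rule sum_nonneg) (use nn in auto)
  moreover have "push m p F j = 0" if "j \<ge> m" for j
  proof -
    have "{k. k < m \<and> p k = j} = {}" using p that by fastforce
    then show ?thesis unfolding push_def by (simp only: sum.empty)
  qed
  moreover have "push m p F j = 0" if "j < m" "Spt m Smin Smax j \<notin> D" for j
  proof -
    have "{k. k < m \<and> p k = j} = {}" using pD that by fastforce
    then show ?thesis unfolding push_def by (simp only: sum.empty)
  qed
  ultimately show ?thesis unfolding DistsC_def Dists_def by auto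
qed

lemma push_mean:
  assumes F: "F \<in> Dists m" and p: "\<And>k. k < m \<Longrightarrow> p k \<le> k" and m2: "m \<ge> 2" and sl: "Smin < Smax"
  shows "mean m Smin Smax (push m p F) \<le> mean m Smin Smax F"
proof -
  have p': "\<And>k. k < m \<Longrightarrow> p k < m" using p le_less_trans by blast
  have "mean m Smin Smax (push m p F) = (\<Sum>k<m. F k * Spt m Smin Smax (p k))"
    unfolding mean_def by (rule regroup[OF p'])
  also have "\<dots> \<le> (\<Sum>k<m. F k * Spt m Smin Smax k)"
  proof (rule sum_mono)
    fix k assume "k \<in> {..<m}"
    then have "0 \<le> F k" "Spt m Smin Smax (p k) \<le> Spt m Smin Smax k"
      using F p Spt_mono[OF m2 sl] by (auto simp: Dists_def monoD)
    then show "F k * Spt m Smin Smax (p k) \<le> F k * Spt m Smin Smax k" by (simp add: mult_left_mono)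
  qed
  finally show ?thesis unfolding mean_def .
qed

lemma push_prob_ge:
  assumes F: "F \<in> Dists m" and p: "\<And>k. k < m \<Longrightarrow> p k < m"
    and kk: "\<And>ks. ks \<in> Ls m n \<Longrightarrow> sort (map (Spt m Smin Smax) ks) \<in> A \<Longrightarrow> sort (map (Spt m Smin Smax) (map p ks)) \<in> A"
  shows "probS m n Smin Smax F A \<le> probS m n Smin Smax (push m p F) A"
proof -
  have "probS m n Smin Smax (push m p F) A =
     (\<Sum>ks\<in>Ls m n. (if sort (map (Spt m Smin Smax) (map p ks)) \<in> A then 1 else 0) * prod_list (map F ks))"
    unfolding probS_alt by (rule push_prob[OF p])
  moreover have "probS m n Smin Smax F A \<le> \<dots>"
    unfolding probS_alt
  proof (rule sum_mono)
    fix ks assume ks: "ks \<in> Ls m n"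
    have "0 \<le> prod_list (map F ks)"
      using ks F by (intro prod_list_nonneg) (auto simp: Ls_def Dists_def)
    then show "(if sort (map (Spt m Smin Smax) ks) \<in> A then 1 else 0) * prod_list (map F ks)
        \<le> (if sort (map (Spt m Smin Smax) (map p ks)) \<in> A then 1 else 0) * prod_list (map F ks)"
      using kk[OF ks] by auto
  qed
  ultimately show ?thesis by simp
qed


lemma Gset_nonempty:
  assumes m2: "m \<ge> 2" and sl: "Smin < Smax" and xs: "xs \<in> Samples m n Smin Smax" and a: "\<alpha> < 1"
  shows "Gset m n Smin Smax (OmegaT m n Smin Smax xs) \<alpha> \<noteq> {}"
proof -
  define T where "T = m - 1"
  define F1 where "F1 = (\<lambda>k. if k = T then 1 else 0::real)"
  have Tm: "T < m" using m2 T_def by simp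
  have D: "F1 \<in> Dists m" unfolding Dists_def F1_def using Tm by auto
  define r where "r = replicate n T"
  have rL: "r \<in> Ls m n" unfolding r_def Ls_def using Tm by auto
  have xsL: "length xs = n" "sorted xs" "set xs \<subseteq> Sset m Smin Smax" using xs unfolding Samples_def by auto
  have top: "y \<le> Spt m Smin Smax T" if "y \<in> Sset m Smin Smax" for y
    using that Spt_mono[OF m2 sl] unfolding Sset_def T_def by (auto simp: monoD)
  have sr: "sort (map (Spt m Smin Smax) r) = replicate n (Spt m Smin Smax T)"
    unfolding r_def by simp
  have "lowlex_le xs (replicate n (Spt m Smin Smax T))"
  proof (cases "xs = replicate n (Spt m Smin Smax T)")
    case True then show ?thesis unfolding lowlex_le_def by simp
  next
    case False
    have ex: "\<exists>i. i < n \<and> xs ! i \<noteq> Spt m Smin Smax T"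
    proof (rule ccontr)
      assume "\<not> ?thesis"
      then have "xs = replicate n (Spt m Smin Smax T)"
        by (intro nth_equalityI) (auto simp: xsL(1))
      with False show False by simp
    qed
    define j where "j = (LEAST i. i < n \<and> xs ! i \<noteq> Spt m Smin Smax T)"
    have j12: "j < n \<and> xs ! j \<noteq> Spt m Smin Smax T" unfolding j_def using ex by (rule LeastI_ex)
    have j3: "\<forall>i<j. xs ! i = Spt m Smin Smax T"
    proof (intro allI impI)
      fix i assume "i < j"
      then have "\<not> (i < n \<and> xs ! i \<noteq> Spt m Smin Smax T)" unfolding j_def by (rule not_less_Least)
      then show "xs ! i = Spt m Smin Smax T" using \<open>i < j\<close> j12 by auto
    qed
    have j: "j < n" "xs ! j \<noteq> Spt m Smin Smax T" "\<forall>i<j. xs ! i = Spt m Smin Smax T"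
      using j12 j3 by auto
    have "xs ! j \<in> Sset m Smin Smax" using xsL j(1) by (metis nth_mem subsetD)
    then have "xs ! j < Spt m Smin Smax T" using top j(2) by (meson order_le_neq_trans)
    then show ?thesis unfolding lowlex_le_def using j xsL(1) by auto
  qed
  moreover have "replicate n (Spt m Smin Smax T) \<in> Samples m n Smin Smax"
    unfolding Samples_def Sset_def using Tm by auto
  ultimately have rin: "sort (map (Spt m Smin Smax) r) \<in> OmegaT m n Smin Smax xs"
    unfolding OmegaT_def sr by simp
  have "probS m n Smin Smax F1 (OmegaT m n Smin Smax xs) = 1"
  proof -
    have z: "(if sort (map (Spt m Smin Smax) ks) \<in> OmegaT m n Smin Smax xs then 1 else 0) * prod_list (map F1 ks) = 0"
      if "ks \<in> Ls m n - {r}" for ks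
    proof -
      have "length ks = n" "ks \<noteq> r" using that unfolding Ls_def by auto
      then have "\<exists>x\<in>set ks. x \<noteq> T" unfolding r_def by (metis replicate_length_same)
      then obtain x where x: "x \<in> set ks" "x \<noteq> T" by blast
      have "F1 x \<in> set (map F1 ks)" using x(1) by simp
      then have "0 \<in> set (map F1 ks)" using x(2) unfolding F1_def by simp
      then show ?thesis by (simp add: prod_list_zero_iff)
    qed
    have "probS m n Smin Smax F1 (OmegaT m n Smin Smax xs) =
       (if sort (map (Spt m Smin Smax) r) \<in> OmegaT m n Smin Smax xs then 1 else 0) * prod_list (map F1 r)
       + (\<Sum>ks\<in>Ls m n - {r}. (if sort (map (Spt m Smin Smax) ks) \<in> OmegaT m n Smin Smax xs then 1 else 0) * prod_list (map F1 ks))"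
      unfolding probS_alt by (rule sum.remove[OF Ls_finite rL])
    also have "\<dots> = (if sort (map (Spt m Smin Smax) r) \<in> OmegaT m n Smin Smax xs then 1 else 0) * prod_list (map F1 r)"
    proof -
      have "(\<Sum>ks\<in>Ls m n - {r}. (if sort (map (Spt m Smin Smax) ks) \<in> OmegaT m n Smin Smax xs then 1 else 0) * prod_list (map F1 ks)) = 0"
        by (rule sum.neutral) (use z in blast)
      then show ?thesis by (simp only: add_0_right)
    qed
    also have "\<dots> = 1" using rin unfolding r_def F1_def by (simp add: prod_list_replicate)
    finally show ?thesis .
  qed
  then have "F1 \<in> Gset m n Smin Smax (OmegaT m n Smin Smax xs) \<alpha>" unfolding Gset_def using D a by simp
  then show ?thesis by blast
qed


theorem theorem7:
  fixes m n :: nat and Smin Smax \<alpha> :: real and xs :: "real list"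
  assumes "m \<ge> 2" and "n \<ge> 1" and "Smin < Smax"
    and "xs \<in> Samples m n Smin Smax"
    and "0 \<le> \<alpha>" and "\<alpha> < 1"
  defines "C \<equiv> set xs"
  shows "Bstar m n Smin Smax \<alpha> xs \<in>
           mean m Smin Smax ` FsetC m n Smin Smax (Cplus m Smin Smax C) (OmegaT m n Smin Smax xs) \<alpha>
       \<and> (\<forall>F \<in> FsetC m n Smin Smax (Cplus m Smin Smax C) (OmegaT m n Smin Smax xs) \<alpha>.
            Bstar m n Smin Smax \<alpha> xs \<le> mean m Smin Smax F)"
proof -
  note m2 = assms(1) and sl = assms(3) and xs = assms(4)
  define D where "D = Cplus m Smin Smax C"
  define A where "A = OmegaT m n Smin Smax xs"
  define G where "G = Gset m n Smin Smax A \<alpha>"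
  define GC where "GC = GsetC m n Smin Smax D A \<alpha>"
  define mu where "mu = mean m Smin Smax"
  define S where "S = Spt m Smin Smax"
  define p where "p = psi (\<lambda>j. S j \<in> D)"
  have FF: "Fset m n Smin Smax A \<alpha> = closure G" unfolding Fset_def G_def ..
  have FC: "FsetC m n Smin Smax D A \<alpha> = closure GC" unfolding FsetC_def GC_def ..
  have B: "Bstar m n Smin Smax \<alpha> xs = Inf (mu ` closure G)"
    unfolding Bstar_def FF[unfolded A_def, symmetric] mu_def ..
  have D1: "set xs \<subseteq> D" unfolding D_def Cplus_def C_def by auto
  have D2: "S (Suc k) \<in> D" if "Suc k < m" "S k \<in> set xs" for k
    unfolding D_def Cplus_def C_def using that S_def by auto
  have P0: "S 0 \<in> D" unfolding D_def Cplus_def S_def Spt_0 by auto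
  have pp: "p z \<le> z" "S (p z) \<in> D" for z
    unfolding p_def using psi_props[where P="\<lambda>j. S j \<in> D", OF P0] by auto
  have plt: "k < m \<Longrightarrow> p k < m" for k using pp(1)[of k] by simp
  have GD: "G \<subseteq> Dists m" unfolding G_def Gset_def by auto
  have GCG: "GC \<subseteq> G" unfolding GC_def GsetC_def G_def by auto
  have cGD: "closure G \<subseteq> Dists m" using GD closed_Dists by (rule closure_minimal)
  have Gne: "G \<noteq> {}" unfolding G_def A_def by (rule Gset_nonempty[OF m2 sl xs assms(6)])
  have cpt: "compact (closure G)"
  proof -
    have "closure G = PiE UNIV (\<lambda>k. if k < m then {0..1::real} else {0}) \<inter> closure G"
      using cGD Dists_box[of m] by blast
    then show ?thesis using compact_Int_closed[OF compact_box[of m] closed_closure[of G]] by simp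
  qed
  have "compact (mu ` closure G)" unfolding mu_def by (rule compact_continuous_image[OF cont_mean cpt])
  moreover have "mu ` closure G \<noteq> {}" using Gne by simp
  ultimately have "\<exists>s\<in>mu ` closure G. \<forall>t\<in>mu ` closure G. s \<le> t"
    by (rule compact_attains_inf)
  then obtain F0 where F0a: "F0 \<in> closure G" "\<forall>t\<in>mu ` closure G. mu F0 \<le> t" by blast
  have F0: "F0 \<in> closure G" "\<And>F. F \<in> closure G \<Longrightarrow> mu F0 \<le> mu F" using F0a by auto
  have BF0: "Bstar m n Smin Smax \<alpha> xs = mu F0"
    unfolding B by (rule cInf_eq_minimum) (use F0 in auto)
  have pushG: "push m p F \<in> GC" if "F \<in> G" for F
  proof -
    have Fd: "F \<in> Dists m" using that GD by auto
    have "push m p F \<in> DistsC m Smin Smax D"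
      by (rule push_Dists[OF Fd plt]) (use pp(2) S_def in auto)
    moreover have "probS m n Smin Smax F A \<le> probS m n Smin Smax (push m p F) A"
    proof (rule push_prob_ge[OF Fd plt])
      fix ks assume "ks \<in> Ls m n" "sort (map (Spt m Smin Smax) ks) \<in> A"
      note ks = this
      have D2': "\<And>k. Suc k < m \<Longrightarrow> Spt m Smin Smax k \<in> set xs \<Longrightarrow> Spt m Smin Smax (Suc k) \<in> D"
        using D2 unfolding S_def by blast
      have P0': "Spt m Smin Smax 0 \<in> D" using P0 unfolding S_def .
      have in1: "sort (map (Spt m Smin Smax) ks) \<in> OmegaT m n Smin Smax xs" using ks(2) unfolding A_def .
      have "sort (map (Spt m Smin Smax) (map (psi (\<lambda>j. Spt m Smin Smax j \<in> D)) ks)) \<in> OmegaT m n Smin Smax xs"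
        by (rule key[OF m2 sl xs ks(1) D1 D2' P0' in1])
      then show "sort (map (Spt m Smin Smax) (map p ks)) \<in> A"
        unfolding A_def p_def S_def .
    qed
    moreover have "probS m n Smin Smax F A > \<alpha>" using that unfolding G_def Gset_def by auto
    ultimately show ?thesis unfolding GC_def GsetC_def Gset_def DistsC_def by auto
  qed
  have "push m p ` closure G \<subseteq> closure GC"
    by (rule image_closure_subset[OF cont_push closed_closure]) (use pushG closure_subset in blast)
  then have P1: "push m p F0 \<in> closure GC" using F0(1) by blast
  have cGC: "closure GC \<subseteq> closure G" using GCG by (rule closure_mono)
  have "mu (push m p F0) \<le> mu F0" unfolding mu_def
    by (rule push_mean[OF _ _ m2 sl]) (use F0(1) cGD pp(1) in auto)
  moreover have "mu F0 \<le> mu (push m p F0)" using F0(2) P1 cGC by blast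
  ultimately have "mu (push m p F0) = mu F0" by simp
  then have part1: "Bstar m n Smin Smax \<alpha> xs \<in> mu ` closure GC" using P1 BF0 \<open>mu (push m p F0) = mu F0\<close> by (metis image_eqI)
  have part2: "\<forall>F \<in> closure GC. Bstar m n Smin Smax \<alpha> xs \<le> mu F" using BF0 F0(2) cGC by auto
  have FC': "FsetC m n Smin Smax (Cplus m Smin Smax C) (OmegaT m n Smin Smax xs) \<alpha> = closure GC"
    using FC unfolding D_def A_def .
  show ?thesis unfolding FC' mu_def[symmetric] using part1 part2 by blast
qed

end
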